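(* Let $d\ge2$ and $\alpha>0$. The map $F_\alpha:\mathbf{Sym}_d^+\to\mathbb{R}^+$, $F_\alpha(A)=(\det A)^\alpha$, is $\Lambda$-concave if and only if $\alpha\le\frac1{d-1}$.
   Context: $\mathbf{Sym}_d^+$ is the cone of real symmetric positive semi-definite $d\times d$ matrices. A function $F:\mathbf{Sym}_d^+\to\mathbb{R}$ is called $\Lambda$-concave if for all $B,C\in\mathbf{Sym}_d^+$ with $\det(C-B)=0$, the restriction of $F$ to the segment $[B,C]$ is concave, i.e. $t\mapsto F((1-t)B+tC)$ is concave on $[0,1]$. *)

theory Defs
  imports "HOL-Analysis.Analysis"
begin

definition psd_sym :: "(real^'n^'n) set" where
  "psd_sym = {A. transpose A = A \<and> (\<forall>x. 0 \<le> x \<bullet> (A *v x))}"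

definition Lambda_concave :: "(real^'n^'n \<Rightarrow> real) \<Rightarrow> bool" where
  "Lambda_concave F \<longleftrightarrow>
     (\<forall>B\<in>psd_sym. \<forall>C\<in>psd_sym. det (C - B) = 0 \<longrightarrow>
        concave_on {0..1} (\<lambda>t::real. F ((1 - t) *\<^sub>R B + t *\<^sub>R C)))"

end

theory Submission
  imports Defs
begin



lemma sym_inner:
  fixes A :: "real^'n^'n"
  assumes "transpose A = A"
  shows "(A *v x) \<bullet> y = x \<bullet> (A *v y)"
proof -
  have "x \<bullet> (A *v y) = (x v* A) \<bullet> y" by (simp add: dot_lmul_matrix)
  also have "x v* A = A *v x" by (metis assms transpose_matrix_vector)
  finally show ?thesis by simp
qed

lemma small_lin:
  fixes c K :: real
  assumes "\<And>e. 2 * e * c \<le> e^2 * K"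
  shows "c = 0"
proof (rule ccontr)
  assume "c \<noteq> 0"
  define e where "e = c / (\<bar>K\<bar> + 1)"
  have pos: "\<bar>K\<bar> + 1 > 0" by simp
  have h: "2 * e * c \<le> e^2 * K" by (rule assms)
  have em: "e * (\<bar>K\<bar> + 1) = c" using pos by (simp add: e_def)
  have a: "2*e*c * (\<bar>K\<bar> + 1)^2 = 2*c^2*(\<bar>K\<bar> + 1)"
  proof -
    have "2*e*c * (\<bar>K\<bar> + 1)^2 = 2*c*(e * (\<bar>K\<bar> + 1))*(\<bar>K\<bar> + 1)"
      by (simp add: power2_eq_square algebra_simps)
    thus ?thesis using em by (simp add: power2_eq_square)
  qed
  have b: "e^2*K * (\<bar>K\<bar> + 1)^2 = c^2*K"
    using em by (metis power_mult_distrib mult.commute mult.left_commute)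
  have "2*c^2*(\<bar>K\<bar> + 1) \<le> c^2*K"
    using mult_right_mono[OF h, of "(\<bar>K\<bar> + 1)^2"] a b by simp
  hence "c^2 * (2*(\<bar>K\<bar> + 1) - K) \<le> 0" by (simp add: algebra_simps)
  moreover have "c^2 > 0" using \<open>c \<noteq> 0\<close> by simp
  moreover have "2*(\<bar>K\<bar> + 1) - K > 0" by (smt (verit) abs_ge_self)
  ultimately have False by (simp add: mult_le_0_iff)
  thus False by linarith
qed

lemma exists_eigen:
  fixes A :: "real^'n^'n"
  assumes sym: "transpose A = A" and S: "subspace S" "S \<noteq> {0}"
    and inv: "\<And>x. x \<in> S \<Longrightarrow> A *v x \<in> S"
  shows "\<exists>v l. v \<in> S \<and> norm v = 1 \<and> A *v v = l *\<^sub>R v"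
proof -
  let ?q = "\<lambda>x. x \<bullet> (A *v x)"
  have cpt: "compact (S \<inter> sphere 0 1)"
    by (simp add: closed_subspace S(1) closed_Int_compact)
  obtain y where "y \<in> S" "y \<noteq> 0" using S subspace_0 by blast
  hence ne: "S \<inter> sphere 0 1 \<noteq> {}"
    using S(1) by (intro exI[of _ "(1/norm y) *\<^sub>R y"] notI)
      (auto simp: subspace_scale dest: equals0D[of _ "(1/norm y) *\<^sub>R y"])
  have cont: "continuous_on (S \<inter> sphere 0 1) ?q"
    by (intro continuous_intros linear_continuous_on matrix_vector_mul_linear)
  obtain v where v: "v \<in> S \<inter> sphere 0 1" and vmax: "\<And>x. x \<in> S \<inter> sphere 0 1 \<Longrightarrow> ?q x \<le> ?q v"
    using continuous_attains_sup[OF cpt ne cont] by blast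
  define l where "l = ?q v"
  have vS: "v \<in> S" and nv: "norm v = 1" using v by auto
  have vv: "v \<bullet> v = 1" using nv by (simp add: dot_square_norm)
  have bound: "?q x \<le> l * (x \<bullet> x)" if "x \<in> S" for x
  proof (cases "x = 0")
    case True then show ?thesis by simp
  next
    case False
    let ?u = "(1/norm x) *\<^sub>R x"
    have "?u \<in> S \<inter> sphere 0 1" using that False S(1) by (auto simp: subspace_scale)
    hence "?q ?u \<le> l" unfolding l_def by (rule vmax)
    moreover have "?q ?u = ?q x / (norm x)^2"
      by (simp add: matrix_vector_mult_scaleR power2_eq_square)
    moreover have "x \<bullet> x = (norm x)^2" by (simp add: dot_square_norm)
    moreover have "(norm x)^2 > 0" using False by simp
    ultimately show ?thesis by (simp add: field_simps)
  qed
  have orth: "w \<bullet> (A *v v) = 0" if "w \<in> S" "w \<bullet> v = 0" for w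
  proof (rule small_lin[where K = "l * (w \<bullet> w) - ?q w"])
    fix e :: real
    have "v + e *\<^sub>R w \<in> S" using vS that S(1) by (simp add: subspace_add subspace_scale)
    hence ineq: "?q (v + e *\<^sub>R w) \<le> l * ((v + e *\<^sub>R w) \<bullet> (v + e *\<^sub>R w))" by (rule bound)
    have eq1: "?q (v + e *\<^sub>R w) = l + 2 * e * (w \<bullet> (A *v v)) + e^2 * ?q w"
    proof -
      have "v \<bullet> (A *v w) = w \<bullet> (A *v v)"
        using sym_inner[OF sym, of v w] by (simp add: inner_commute)
      thus ?thesis
        by (simp add: l_def matrix_vector_right_distrib matrix_vector_mult_scaleR inner_add_left
            inner_add_right power2_eq_square algebra_simps)
    qed
    have eq2: "(v + e *\<^sub>R w) \<bullet> (v + e *\<^sub>R w) = 1 + e^2 * (w \<bullet> w)"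
      using vv that(2) by (simp add: inner_add_left inner_add_right inner_commute power2_eq_square)
    have "l * (1 + e^2 * (w \<bullet> w)) = l + e^2 * (l * (w \<bullet> w))" by (simp add: algebra_simps)
    moreover have "e^2 * (l * (w \<bullet> w) - ?q w) = e^2 * (l * (w \<bullet> w)) - e^2 * ?q w"
      by (simp add: algebra_simps)
    ultimately show "2 * e * (w \<bullet> (A *v v)) \<le> e^2 * (l * (w \<bullet> w) - ?q w)"
      using ineq[unfolded eq1 eq2] by (smt (verit))
  qed
  define u where "u = A *v v - l *\<^sub>R v"
  have uS: "u \<in> S" using inv[OF vS] vS S(1) by (simp add: u_def subspace_diff subspace_scale)
  have "(A *v v) \<bullet> v = l" by (simp add: l_def inner_commute)
  hence "u \<bullet> v = 0" using vv by (simp add: u_def inner_diff_left)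
  hence "u \<bullet> (A *v v) = 0" using orth uS by blast
  hence "u \<bullet> u = 0" using \<open>u \<bullet> v = 0\<close> by (simp add: u_def inner_diff_right)
  hence "u = 0" by simp
  thus ?thesis using vS nv by (intro exI[of _ v] exI[of _ l]) (simp add: u_def)
qed

lemma eigen_set:
  fixes A :: "real^'n^'n"
  assumes sym: "transpose A = A"
  shows "subspace S \<Longrightarrow> (\<And>x. x \<in> S \<Longrightarrow> A *v x \<in> S) \<Longrightarrow> dim S = k \<Longrightarrow>
    \<exists>E. finite E \<and> card E = k \<and> E \<subseteq> S \<and> (\<forall>x\<in>E. norm x = 1 \<and> (\<exists>l. A *v x = l *\<^sub>R x))
      \<and> (\<forall>x\<in>E. \<forall>y\<in>E. x \<noteq> y \<longrightarrow> x \<bullet> y = 0)"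
proof (induction k arbitrary: S)
  case 0
  then show ?case by (intro exI[of _ "{}"]) auto
next
  case (Suc k)
  have "S \<noteq> {0}" using Suc.prems(3) by auto
  then obtain v l where v: "v \<in> S" "norm v = 1" "A *v v = l *\<^sub>R v"
    using exists_eigen[OF sym Suc.prems(1)] Suc.prems(2) by blast
  define S' where "S' = {y \<in> S. \<forall>x \<in> span {v}. orthogonal x y}"
  have S'alt: "S' = {y \<in> S. v \<bullet> y = 0}"
    unfolding S'_def orthogonal_def
    by (auto simp: span_singleton)
  have sub': "subspace S'" unfolding S'alt using Suc.prems(1)
    by (auto simp: subspace_def inner_add_right)
  have inv': "A *v x \<in> S'" if "x \<in> S'" for x
  proof -
    have "v \<bullet> (A *v x) = (A *v v) \<bullet> x" using sym_inner[OF sym, of v x] by simp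
    also have "\<dots> = l * (v \<bullet> x)" using v(3) by simp
    finally show ?thesis using that Suc.prems(2) unfolding S'alt by auto
  qed
  have "dim S' + dim (span {v}) = dim S"
    unfolding S'_def
    by (rule dim_subspace_orthogonal_to_vectors) (use Suc.prems(1) v(1) in \<open>auto simp: span_minimal\<close>)
  moreover have "dim (span {v}) = 1" using v(2) using norm_zero by (auto simp: dim_span)
  ultimately have "dim S' = k" using Suc.prems(3) by simp
  then obtain E where E: "finite E" "card E = k" "E \<subseteq> S'"
     "\<forall>x\<in>E. norm x = 1 \<and> (\<exists>l. A *v x = l *\<^sub>R x)"
     "\<forall>x\<in>E. \<forall>y\<in>E. x \<noteq> y \<longrightarrow> x \<bullet> y = 0"
    using Suc.IH[OF sub' inv'] by blast
  have vE: "v \<notin> E"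
  proof
    assume "v \<in> E"
    hence "v \<bullet> v = 0" using E(3) unfolding S'alt by auto
    thus False using v(2) by simp
  qed
  show ?case
  proof (intro exI[of _ "insert v E"] conjI)
    show "finite (insert v E)" using E by simp
    show "card (insert v E) = Suc k" using E vE by simp
    show "insert v E \<subseteq> S" using E(3) v(1) unfolding S'alt by auto
    show "\<forall>x\<in>insert v E. norm x = 1 \<and> (\<exists>l. A *v x = l *\<^sub>R x)" using E(4) v by auto
    show "\<forall>x\<in>insert v E. \<forall>y\<in>insert v E. x \<noteq> y \<longrightarrow> x \<bullet> y = 0"
      using E(5) E(3) unfolding S'alt by (auto simp: inner_commute)
  qed
qed

definition dg :: "('n::finite \<Rightarrow> real) \<Rightarrow> real^'n^'n" where
  "dg f = (\<chi> i j. if i = j then f i else 0)"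

lemma spectral:
  fixes A :: "real^'n^'n"
  assumes sym: "transpose A = A"
  shows "\<exists>(Q::real^'n^'n) \<mu>. transpose Q ** Q = mat 1 \<and> transpose Q ** A ** Q = dg \<mu>"
proof -
  obtain E where E: "finite E" "card E = CARD('n)"
     "\<forall>x\<in>E. norm x = 1 \<and> (\<exists>l. A *v x = l *\<^sub>R x)"
     "\<forall>x\<in>E. \<forall>y\<in>E. x \<noteq> y \<longrightarrow> x \<bullet> y = 0"
    using eigen_set[OF sym, of UNIV "CARD('n)"] by auto
  obtain h where h: "bij_betw h (UNIV::'n set) E"
    using finite_same_card_bij[of "UNIV::'n set" E] E by auto
  have hE: "h i \<in> E" for i using h by (auto simp: bij_betw_def)
  have hinj: "h i = h j \<Longrightarrow> i = j" for i j using h by (auto simp: bij_betw_def inj_on_def)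
  have orth: "h i \<bullet> h j = (if i = j then 1 else 0)" for i j
  proof (cases "i = j")
    case True then show ?thesis using E(3) hE[of i] by (simp add: dot_square_norm)
  next
    case False then show ?thesis using E(4) hE hinj by metis
  qed
  define \<mu> where "\<mu> i = h i \<bullet> (A *v h i)" for i
  have eig: "A *v h i = \<mu> i *\<^sub>R h i" for i
  proof -
    obtain l where l: "A *v h i = l *\<^sub>R h i" using E(3) hE[of i] by blast
    hence "\<mu> i = l" using orth[of i i] by (simp add: \<mu>_def)
    thus ?thesis using l by simp
  qed
  define Q :: "real^'n^'n" where "Q = (\<chi> r c. h c $ r)"
  have QQ: "transpose Q ** Q = mat 1"
    by (simp add: Q_def matrix_matrix_mult_def transpose_def mat_def vec_eq_iff
        orth[unfolded inner_vec_def, simplified] inner_vec_def)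
  have AQ: "A ** Q = Q ** dg \<mu>"
  proof -
    have "(A ** Q) $ r $ c = (Q ** dg \<mu>) $ r $ c" for r c
    proof -
      have "(A ** Q) $ r $ c = (A *v h c) $ r"
        by (simp add: Q_def matrix_matrix_mult_def matrix_vector_mult_def)
      also have "\<dots> = \<mu> c * h c $ r" by (simp add: eig)
      also have "\<dots> = (Q ** dg \<mu>) $ r $ c"
        by (simp add: Q_def dg_def matrix_matrix_mult_def if_distrib cong: if_cong)
      finally show ?thesis .
    qed
    thus ?thesis by (simp add: vec_eq_iff)
  qed
  have "transpose Q ** A ** Q = dg \<mu>"
    by (metis AQ QQ matrix_mul_assoc matrix_mul_lid)
  thus ?thesis using QQ by blast
qed



lemma mat_add_rdistrib:
  fixes A B C :: "real^'n^'n"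
  shows "(A + B) ** C = A ** C + B ** C"
  by (simp add: matrix_matrix_mult_def vec_eq_iff distrib_right sum.distrib)

lemma congr_lin:
  fixes P X Y :: "real^'n^'n"
  shows "transpose P ** (X + t *\<^sub>R Y) ** P = transpose P ** X ** P + t *\<^sub>R (transpose P ** Y ** P)"
  by (simp add: matrix_add_ldistrib mat_add_rdistrib matrix_scalar_ac scalar_matrix_assoc)

lemma congr_comp:
  fixes P R X :: "real^'n^'n"
  shows "transpose (P ** R) ** X ** (P ** R) = transpose R ** (transpose P ** X ** P) ** R"
  by (simp add: matrix_transpose_mul matrix_mul_assoc)

lemma congr_det:
  fixes P X :: "real^'n^'n"
  shows "det (transpose P ** X ** P) = det P * det P * det X"
  by (simp add: det_mul)

lemma quad_congr:
  fixes P X :: "real^'n^'n"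
  shows "x \<bullet> ((transpose P ** X ** P) *v x) = (P *v x) \<bullet> (X *v (P *v x))"
proof -
  have "(transpose P ** X ** P) *v x = transpose P *v (X *v (P *v x))"
    by (simp add: matrix_vector_mul_assoc matrix_mul_assoc)
  moreover have "x \<bullet> (transpose P *v y) = (P *v x) \<bullet> y" for y
    by (metis dot_lmul_matrix vector_transpose_matrix)
  ultimately show ?thesis by simp
qed

lemma md_l: "(if b then (x::real) else 0) * y = (if b then x*y else 0)" by simp
lemma md_r: "(x::real) * (if b then y else 0) = (if b then x*y else 0)" by simp

lemma dg_quad: "axis i 1 \<bullet> (dg f *v axis i 1) = f i"
  unfolding inner_axis' by (simp add: dg_def matrix_vector_mult_def axis_def md_l md_r)

lemma dg_mul: "dg a ** dg b = dg (\<lambda>i. a i * b i)"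
  by (simp add: dg_def matrix_matrix_mult_def vec_eq_iff md_l md_r)

lemma dg_transpose: "transpose (dg a) = dg a"
  by (simp add: dg_def transpose_def vec_eq_iff)

lemma dg_one: "mat 1 = dg (\<lambda>_. 1)"
  by (simp add: dg_def mat_def vec_eq_iff)

lemma dg_lin: "dg a + t *\<^sub>R dg b = dg (\<lambda>i. a i + t * b i)"
  by (simp add: dg_def vec_eq_iff)

lemma dg_det: "det (dg a) = (\<Prod>i\<in>UNIV. a i)"
  by (subst det_diagonal) (auto simp: dg_def)



lemma orth_inj:
  fixes Q :: "real^'n^'n"
  assumes "transpose Q ** Q = mat 1" "x \<noteq> 0"
  shows "Q *v x \<noteq> 0"
proof
  assume "Q *v x = 0"
  hence "transpose Q *v (Q *v x) = 0" by simp
  thus False using assms by (simp add: matrix_vector_mul_assoc)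
qed

lemma pd_factor:
  fixes B M :: "real^'n^'n"
  assumes symB: "transpose B = B" and pdB: "\<And>x. x \<noteq> 0 \<Longrightarrow> x \<bullet> (B *v x) > 0"
    and symM: "transpose M = M" and detM: "det M = 0"
    and psdC: "\<And>x. 0 \<le> x \<bullet> ((B + M) *v x)"
  shows "\<exists>c>0. \<exists>\<mu>::'n \<Rightarrow> real. (\<exists>j. \<mu> j = 0) \<and> (\<forall>i. 0 \<le> 1 + \<mu> i) \<and>
           (\<forall>t. det (B + t *\<^sub>R M) = c * (\<Prod>i\<in>UNIV. 1 + t * \<mu> i))"
proof -
  obtain Q :: "real^'n^'n" and d where QQ: "transpose Q ** Q = mat 1" and QB: "transpose Q ** B ** Q = dg d"
    using spectral[OF symB] by blast
  have dpos: "d i > 0" for i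
  proof -
    have "d i = (Q *v axis i 1) \<bullet> (B *v (Q *v axis i 1))"
      using dg_quad[of i d] quad_congr[of "axis i 1" Q B] QB by simp
    moreover have "Q *v axis i 1 \<noteq> 0" using orth_inj[OF QQ] by (simp add: axis_eq_0_iff)
    ultimately show ?thesis using pdB by simp
  qed
  define S where "S = dg (\<lambda>i. 1 / sqrt (d i))"
  define P where "P = Q ** S"
  have PBP: "transpose P ** B ** P = mat 1"
  proof -
    have "transpose P ** B ** P = S ** dg d ** S"
      using congr_comp[of Q S B] QB by (simp add: P_def S_def dg_transpose)
    also have "\<dots> = dg (\<lambda>i. 1 / sqrt (d i) * d i * (1 / sqrt (d i)))"
      by (simp add: S_def dg_mul)
    also have "(\<lambda>i. 1 / sqrt (d i) * d i * (1 / sqrt (d i))) = (\<lambda>_. 1)"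
    proof
      fix i
      have "sqrt (d i) * sqrt (d i) = d i" using dpos[of i] by simp
      thus "1 / sqrt (d i) * d i * (1 / sqrt (d i)) = 1" using dpos[of i]
        by (simp add: field_simps)
    qed
    finally show ?thesis by (simp add: dg_one)
  qed
  define N where "N = transpose P ** M ** P"
  have symN: "transpose N = N"
    by (simp add: N_def matrix_transpose_mul symM matrix_mul_assoc)
  obtain R :: "real^'n^'n" and \<mu> where RR: "transpose R ** R = mat 1" and RN: "transpose R ** N ** R = dg \<mu>"
    using spectral[OF symN] by blast
  define G where "G = P ** R"
  have key: "transpose G ** (B + t *\<^sub>R M) ** G = dg (\<lambda>i. 1 + t * \<mu> i)" for t
  proof -
    have "transpose G ** (B + t *\<^sub>R M) ** G = transpose R ** (mat 1 + t *\<^sub>R N) ** R"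
      unfolding G_def congr_comp congr_lin PBP N_def ..
    also have "\<dots> = dg (\<lambda>i. 1 + t * \<mu> i)"
      unfolding congr_lin matrix_mul_rid RR RN by (simp add: dg_one dg_lin)
    finally show ?thesis .
  qed
  have detk: "det G * det G * det (B + t *\<^sub>R M) = (\<Prod>i\<in>UNIV. 1 + t * \<mu> i)" for t
    using arg_cong[OF key[of t], of det] by (simp add: congr_det dg_det)
  have "det G * det G * det B = 1" using detk[of 0] by simp
  hence "det G \<noteq> 0" by (cases "det G = 0") auto
  hence g0: "det G * det G > 0" by (metis not_real_square_gt_zero)
  define c where "c = 1 / (det G * det G)"
  have cpos: "c > 0" using g0 by (simp add: c_def)
  have dete: "det (B + t *\<^sub>R M) = c * (\<Prod>i\<in>UNIV. 1 + t * \<mu> i)" for t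
  proof -
    have "det (B + t *\<^sub>R M) = (det G * det G * det (B + t *\<^sub>R M)) / (det G * det G)"
    proof -
      have "det G \<noteq> 0" using g0 by auto
      thus ?thesis by simp
    qed
    thus ?thesis unfolding detk c_def by simp
  qed
  have "transpose G ** M ** G = dg \<mu>" unfolding G_def congr_comp N_def[symmetric] RN ..
  hence "det (dg \<mu>) = det (transpose G ** M ** G)" by simp
  also have "\<dots> = 0" by (simp add: congr_det detM)
  finally have "(\<Prod>i\<in>UNIV. \<mu> i) = 0" by (simp add: dg_det)
  then obtain j where j: "\<mu> j = 0" by auto
  have nn: "0 \<le> 1 + \<mu> i" for i
  proof -
    have "1 + \<mu> i = axis i 1 \<bullet> ((transpose G ** (B + 1 *\<^sub>R M) ** G) *v axis i 1)"
      unfolding key by (simp add: dg_quad)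
    also have "\<dots> = (G *v axis i 1) \<bullet> ((B + M) *v (G *v axis i 1))"
      by (simp add: quad_congr)
    finally show ?thesis using psdC by simp
  qed
  have P1: "\<exists>j. \<mu> j = 0" using j by blast
  have P2: "\<forall>i. 0 \<le> 1 + \<mu> i" using nn by blast
  have P3: "\<forall>t. det (B + t *\<^sub>R M) = c * (\<Prod>i\<in>UNIV. 1 + t * \<mu> i)" using dete by blast
  show ?thesis
    using cpos P1 P2 P3 by blast
qed




lemma comb_div: "(1-t)*(p/Z) + t*(q/Z) = ((1-t)*p + t*q)/(Z::real)"
  by (simp add: add_divide_distrib)

lemma pow_le_lin:
  fixes G p :: real
  assumes "0 \<le> G" "0 \<le> p" "p \<le> 1"
  shows "G powr p \<le> p * G + (1 - p)"
proof (cases "G = 0")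
  case True then show ?thesis using assms by simp
next
  case False
  hence Gp: "G > 0" using assms by simp
  have "exp ((1 - p) *\<^sub>R 0 + p *\<^sub>R ln G) \<le> (1 - p) * exp 0 + p * exp (ln G)"
    using convex_onD[OF exp_convex, of p 0 "ln G"] assms by simp
  thus ?thesis using Gp by (simp add: powr_def mult.commute)
qed

lemma amgm_slack:
  fixes x :: "'a \<Rightarrow> real"
  assumes "finite K" "\<And>i. i \<in> K \<Longrightarrow> 0 \<le> x i" "0 \<le> w" "real (card K) * w \<le> 1"
  shows "(\<Prod>i\<in>K. x i) powr w \<le> w * (\<Sum>i\<in>K. x i) + (1 - real (card K) * w)"
proof (cases "K = {}")
  case True then show ?thesis by simp
next
  case False
  define k where "k = real (card K)"
  have kpos: "k > 0" using False assms(1) by (simp add: k_def card_gt_0_iff)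
  define G where "G = (\<Prod>i\<in>K. x i) powr (1 / k)"
  have G0: "0 \<le> G" by (simp add: G_def)
  have GA: "G \<le> (\<Sum>i\<in>K. x i / k)"
    unfolding G_def k_def using arith_geom_mean[OF assms(1) False assms(2)] by simp
  have "(\<Prod>i\<in>K. x i) powr w = G powr (k * w)"
    using kpos by (simp add: G_def powr_powr)
  also have "\<dots> \<le> (k * w) * G + (1 - k * w)"
    by (rule pow_le_lin) (use G0 kpos assms(3,4) in \<open>auto simp: k_def\<close>)
  also have "\<dots> \<le> (k * w) * (\<Sum>i\<in>K. x i / k) + (1 - k * w)"
    using GA kpos assms(3) by (simp add: mult_left_mono)
  also have "(k * w) * (\<Sum>i\<in>K. x i / k) = w * (\<Sum>i\<in>K. x i)"
    using kpos by (simp add: sum_divide_distrib[symmetric])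
  finally show ?thesis by (simp add: k_def)
qed

lemma conc_prod:
  fixes \<mu> :: "'a \<Rightarrow> real"
  assumes K: "finite K" and nn: "\<And>i. i \<in> K \<Longrightarrow> 0 \<le> 1 + \<mu> i" and w: "0 < w"
    and kw: "real (card K) * w \<le> 1"
  shows "concave_on {0..1} (\<lambda>t. (\<Prod>i\<in>K. 1 + t * \<mu> i) powr w)"
proof (rule concave_on_linorderI)
  show "convex {0..1::real}" by simp
  fix t x y :: real
  assume t: "0 < t" "t < 1" and xy: "x \<in> {0..1}" "y \<in> {0..1}" "x < y"
  define z where "z = (1 - t) * x + t * y"
  have lnn: "0 \<le> 1 + s * \<mu> i" if "s \<in> {0..1}" "i \<in> K" for s i
  proof -
    have "1 + s * \<mu> i = (1 - s) + s * (1 + \<mu> i)" by (simp add: algebra_simps)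
    also have "\<dots> \<ge> 0" using that nn[of i] by simp
    finally show ?thesis .
  qed
  have Zeq: "1 + z * \<mu> i = (1 - t) * (1 + x * \<mu> i) + t * (1 + y * \<mu> i)" for i
    by (simp add: z_def algebra_simps)
  show "(1 - t) * (\<Prod>i\<in>K. 1 + x * \<mu> i) powr w + t * (\<Prod>i\<in>K. 1 + y * \<mu> i) powr w
        \<le> (\<Prod>i\<in>K. 1 + ((1 - t) *\<^sub>R x + t *\<^sub>R y) * \<mu> i) powr w"
  proof (cases "\<exists>i\<in>K. 1 + z * \<mu> i = 0")
    case True
    then obtain i where i: "i \<in> K" "1 + z * \<mu> i = 0" by blast
    have a: "0 \<le> 1 + x * \<mu> i" "0 \<le> 1 + y * \<mu> i" using lnn xy i by auto
    have "(1 - t) * (1 + x * \<mu> i) + t * (1 + y * \<mu> i) = 0" using Zeq[of i] i by simp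
    hence "1 + x * \<mu> i = 0 \<and> 1 + y * \<mu> i = 0" using a t
      by (smt (verit) mult_pos_pos mult_nonneg_nonneg)
    hence "(\<Prod>i\<in>K. 1 + x * \<mu> i) = 0" "(\<Prod>i\<in>K. 1 + y * \<mu> i) = 0"
      using i K by (auto intro: prod_zero)
    thus ?thesis by simp
  next
    case False
    have zin: "z \<in> {0..1}" using xy t unfolding z_def
      by (auto intro: convex_bound_le add_nonneg_nonneg)
    have Zpos: "0 < 1 + z * \<mu> i" if "i \<in> K" for i
      using False lnn[OF zin that] that by force
    define Z where "Z i = 1 + z * \<mu> i" for i
    define a where "a i = (1 + x * \<mu> i) / Z i" for i
    define b where "b i = (1 + y * \<mu> i) / Z i" for i
    have ab: "(1 - t) * a i + t * b i = 1" if "i \<in> K" for i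
    proof -
      have "(1 - t) * a i + t * b i = ((1 - t) * (1 + x * \<mu> i) + t * (1 + y * \<mu> i)) / Z i"
        unfolding a_def b_def by (rule comb_div)
      also have "\<dots> = Z i / Z i" using Zeq[of i] by (simp add: Z_def)
      also have "\<dots> = 1" using Zpos[OF that] by (simp add: Z_def)
      finally show ?thesis .
    qed
    have Za: "Z i * a i = 1 + x * \<mu> i" "Z i * b i = 1 + y * \<mu> i" if "i \<in> K" for i
      using Zpos[OF that] by (simp_all add: a_def b_def Z_def)
    have xa: "(\<Prod>i\<in>K. 1 + x * \<mu> i) = (\<Prod>i\<in>K. Z i) * (\<Prod>i\<in>K. a i)"
      unfolding prod.distrib[symmetric] using Za by (intro prod.cong) auto
    have yb: "(\<Prod>i\<in>K. 1 + y * \<mu> i) = (\<Prod>i\<in>K. Z i) * (\<Prod>i\<in>K. b i)"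
      unfolding prod.distrib[symmetric] using Za by (intro prod.cong) auto
    define H where "H = (\<Prod>i\<in>K. Z i) powr w"
    have H0: "0 \<le> H" by (simp add: H_def)
    have a0: "0 \<le> a i" "0 \<le> b i" if "i \<in> K" for i
      using lnn[OF _ that] xy Zpos[OF that] by (auto simp: a_def b_def Z_def)
    have A: "(\<Prod>i\<in>K. a i) powr w \<le> w * (\<Sum>i\<in>K. a i) + (1 - real (card K) * w)"
      by (rule amgm_slack) (use K a0 w kw in auto)
    have B: "(\<Prod>i\<in>K. b i) powr w \<le> w * (\<Sum>i\<in>K. b i) + (1 - real (card K) * w)"
      by (rule amgm_slack) (use K a0 w kw in auto)
    have "(1 - t) * (\<Prod>i\<in>K. a i) powr w + t * (\<Prod>i\<in>K. b i) powr w
       \<le> (1 - t) * (w * (\<Sum>i\<in>K. a i) + (1 - real (card K) * w)) + t * (w * (\<Sum>i\<in>K. b i) + (1 - real (card K) * w))"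
      using A B t by (intro add_mono mult_left_mono) auto
    also have "\<dots> = w * (\<Sum>i\<in>K. (1 - t) * a i + t * b i) + (1 - real (card K) * w)"
    proof -
      have eqs: "(\<Sum>i\<in>K. (1 - t) * a i + t * b i) = (1 - t) * (\<Sum>i\<in>K. a i) + t * (\<Sum>i\<in>K. b i)"
        by (simp add: sum.distrib sum_distrib_left)
      show ?thesis unfolding eqs by (simp add: algebra_simps)
    qed
    also have "(\<Sum>i\<in>K. (1 - t) * a i + t * b i) = real (card K)"
      using ab by simp
    finally have ineq: "(1 - t) * (\<Prod>i\<in>K. a i) powr w + t * (\<Prod>i\<in>K. b i) powr w \<le> 1" by simp
    have "(1 - t) * (\<Prod>i\<in>K. 1 + x * \<mu> i) powr w + t * (\<Prod>i\<in>K. 1 + y * \<mu> i) powr w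
        = H * ((1 - t) * (\<Prod>i\<in>K. a i) powr w + t * (\<Prod>i\<in>K. b i) powr w)"
      unfolding xa yb H_def powr_mult by (simp add: algebra_simps)
    also have "\<dots> \<le> H" using ineq H0 by (simp add: mult_left_le)
    also have "H = (\<Prod>i\<in>K. 1 + ((1 - t) *\<^sub>R x + t *\<^sub>R y) * \<mu> i) powr w"
      by (simp add: H_def Z_def z_def)
    finally show ?thesis .
  qed
qed




lemma conc_det:
  fixes \<mu> :: "'n::finite \<Rightarrow> real"
  assumes c: "c > 0" and j: "\<mu> j = 0" and nn: "\<And>i. 0 \<le> 1 + \<mu> i" and a: "\<alpha> > 0"
    and ad: "\<alpha> * (real CARD('n) - 1) \<le> 1"
  shows "concave_on {0..1} (\<lambda>t. (c * (\<Prod>i\<in>UNIV. 1 + t * \<mu> i)) powr \<alpha>)"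
proof -
  define K where "K = {i. \<mu> i \<noteq> 0}"
  have fK: "finite K" by simp
  have pe: "(\<Prod>i\<in>UNIV. 1 + t * \<mu> i) = (\<Prod>i\<in>K. 1 + t * \<mu> i)" for t
    by (rule prod.mono_neutral_left[symmetric]) (auto simp: K_def)
  have "K \<subseteq> UNIV - {j}" using j by (auto simp: K_def)
  hence "card K \<le> card (UNIV - {j} :: 'n set)" by (intro card_mono) auto
  also have "\<dots> = CARD('n) - 1" by (simp add: card_Diff_singleton)
  finally have ck: "card K \<le> CARD('n) - 1" .
  have "CARD('n) \<ge> 1" by (simp add: Suc_leI)
  hence "real (card K) \<le> real CARD('n) - 1" using ck by linarith
  hence kw: "real (card K) * \<alpha> \<le> 1" using a ad
    by (smt (verit) mult_right_mono mult.commute)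
  have "concave_on {0..1} (\<lambda>t. c powr \<alpha> * (\<Prod>i\<in>K. 1 + t * \<mu> i) powr \<alpha>)"
    by (intro concave_on_cmul conc_prod) (use fK nn a kw in auto)
  moreover have "(\<lambda>t. (c * (\<Prod>i\<in>UNIV. 1 + t * \<mu> i)) powr \<alpha>) = (\<lambda>t. c powr \<alpha> * (\<Prod>i\<in>K. 1 + t * \<mu> i) powr \<alpha>)"
    by (simp add: pe powr_mult)
  ultimately show ?thesis by simp
qed

lemma concave_limit:
  fixes f :: "nat \<Rightarrow> real \<Rightarrow> real"
  assumes conc: "\<And>n. concave_on S (f n)" and lim: "\<And>x. x \<in> S \<Longrightarrow> (\<lambda>n. f n x) \<longlonglongrightarrow> g x"
    and cvx: "convex S"
  shows "concave_on S g"
  unfolding concave_on_iff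
proof (intro conjI cvx ballI allI impI)
  fix x y u v :: real
  assume xy: "x \<in> S" "y \<in> S" and uv: "0 \<le> u" "0 \<le> v" "u + v = 1"
  have p: "u *\<^sub>R x + v *\<^sub>R y \<in> S" using cvx xy uv by (simp add: convex_def)
  have "(\<lambda>n. u * f n x + v * f n y) \<longlonglongrightarrow> u * g x + v * g y"
    by (intro tendsto_intros lim xy)
  moreover have "(\<lambda>n. f n (u *\<^sub>R x + v *\<^sub>R y)) \<longlonglongrightarrow> g (u *\<^sub>R x + v *\<^sub>R y)" by (rule lim[OF p])
  moreover have "\<forall>n. u * f n x + v * f n y \<le> f n (u *\<^sub>R x + v *\<^sub>R y)"
    using conc xy uv by (auto simp: concave_on_iff)
  ultimately show "u * g x + v * g y \<le> g (u *\<^sub>R x + v *\<^sub>R y)"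
    by (intro LIMSEQ_le) auto
qed

lemma det_tendsto:
  fixes X :: "nat \<Rightarrow> real^'n^'n"
  assumes "X \<longlonglongrightarrow> A"
  shows "(\<lambda>n. det (X n)) \<longlonglongrightarrow> det A"
proof -
  have e: "(\<lambda>n. X n $ i $ j) \<longlonglongrightarrow> A $ i $ j" for i j
    by (intro tendsto_vec_nth assms)
  show ?thesis unfolding det_def
    by (intro tendsto_intros e)
qed

lemma transpose_plus: "transpose (A + B) = transpose A + transpose (B::real^'n^'n)"
  by (simp add: transpose_def vec_eq_iff)

lemma transpose_sc: "transpose (k *\<^sub>R A) = k *\<^sub>R transpose (A::real^'n^'n)"
  by (simp add: transpose_def vec_eq_iff)

lemma approx_step:
  fixes B C :: "real^'n^'n"
  assumes B: "B \<in> psd_sym" and C: "C \<in> psd_sym" and d: "det (C - B) = 0" and e: "e > 0"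
    and a: "\<alpha> > 0" and ad: "\<alpha> * (real CARD('n) - 1) \<le> 1"
  shows "concave_on {0..1} (\<lambda>t. det ((1 - t) *\<^sub>R B + t *\<^sub>R C + e *\<^sub>R mat 1) powr \<alpha>)
     \<and> (\<forall>t\<in>{0..1}. 0 \<le> det ((1 - t) *\<^sub>R B + t *\<^sub>R C + e *\<^sub>R mat 1))"
proof -
  define B' where "B' = B + e *\<^sub>R mat 1"
  define M where "M = C - B"
  have sB: "transpose B = B" and pB: "\<And>x. 0 \<le> x \<bullet> (B *v x)" using B by (auto simp: psd_sym_def)
  have sC: "transpose C = C" and pC: "\<And>x. 0 \<le> x \<bullet> (C *v x)" using C by (auto simp: psd_sym_def)
  have sB': "transpose B' = B'" using sB by (simp add: B'_def transpose_plus transpose_sc)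
  have mv: "(X + e *\<^sub>R mat 1) *v x = X *v x + e *\<^sub>R x" for X :: "real^'n^'n" and x
    by (simp add: matrix_vector_mult_add_rdistrib scaleR_matrix_vector_assoc[symmetric])
  have pdB': "0 < x \<bullet> (B' *v x)" if "x \<noteq> 0" for x
  proof -
    have "x \<bullet> (B' *v x) = x \<bullet> (B *v x) + e * (x \<bullet> x)" by (simp add: B'_def mv inner_add_right)
    moreover have "x \<bullet> x > 0" using that by simp
    ultimately show ?thesis using pB[of x] e by (simp add: add_nonneg_pos)
  qed
  have sM: "transpose M = M" using sB sC by (simp add: M_def transpose_def vec_eq_iff)
  have psd2: "0 \<le> x \<bullet> ((B' + M) *v x)" for x
  proof -
    have "B' + M = C + e *\<^sub>R mat 1" by (simp add: B'_def M_def)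
    hence "x \<bullet> ((B' + M) *v x) = x \<bullet> (C *v x) + e * (x \<bullet> x)" by (simp add: mv inner_add_right)
    thus ?thesis using pC[of x] e by simp
  qed
  have dM: "det M = 0" using d by (simp add: M_def)
  obtain c and \<mu> :: "'n \<Rightarrow> real" where c: "c > 0" and j: "\<exists>j. \<mu> j = 0" and nn: "\<forall>i. 0 \<le> 1 + \<mu> i"
    and dete: "\<forall>t. det (B' + t *\<^sub>R M) = c * (\<Prod>i\<in>UNIV. 1 + t * \<mu> i)"
    using pd_factor[OF sB' pdB' sM dM psd2] by blast
  have path: "(1 - t) *\<^sub>R B + t *\<^sub>R C + e *\<^sub>R mat 1 = B' + t *\<^sub>R M" for t
    by (simp add: B'_def M_def algebra_simps)
  have "concave_on {0..1} (\<lambda>t. (c * (\<Prod>i\<in>UNIV. 1 + t * \<mu> i)) powr \<alpha>)"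
    using j conc_det[OF c _ _ a ad] nn by blast
  moreover have "\<forall>t\<in>{0..1}. 0 \<le> c * (\<Prod>i\<in>UNIV. 1 + t * \<mu> i)"
  proof
    fix t :: real assume t: "t \<in> {0..1}"
    have "0 \<le> 1 + t * \<mu> i" for i
    proof -
      have e1: "1 + t * \<mu> i = (1 - t) + t * (1 + \<mu> i)" by (simp add: algebra_simps)
      have "0 \<le> t * (1 + \<mu> i)" using t nn by simp
      moreover have "0 \<le> 1 - t" using t by simp
      ultimately show ?thesis unfolding e1 by linarith
    qed
    thus "0 \<le> c * (\<Prod>i\<in>UNIV. 1 + t * \<mu> i)" using c by (simp add: prod_nonneg)
  qed
  ultimately show ?thesis unfolding path dete[rule_format] by simp
qed




lemma dg_quad_gen: "x \<bullet> (dg f *v x) = (\<Sum>i\<in>UNIV. f i * (x $ i * x $ i))"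
  by (simp add: dg_def matrix_vector_mult_def inner_vec_def md_l md_r mult.commute mult.left_commute)

lemma dg_psd:
  assumes "\<And>i. 0 \<le> f i"
  shows "dg f \<in> psd_sym"
  unfolding psd_sym_def
  using assms by (auto simp: dg_transpose dg_quad_gen intro!: sum_nonneg)

lemma hard_dir:
  fixes \<alpha> :: real
  assumes a: "\<alpha> > 0" and ad: "\<alpha> * (real CARD('n::finite) - 1) \<le> 1"
  shows "Lambda_concave (\<lambda>A::real^'n^'n. (det A) powr \<alpha>)"
  unfolding Lambda_concave_def
proof (intro ballI impI)
  fix B C :: "real^'n^'n"
  assume B: "B \<in> psd_sym" and C: "C \<in> psd_sym" and d: "det (C - B) = 0"
  define e :: "nat \<Rightarrow> real" where "e n = 1 / real (Suc n)" for n
  have epos: "e n > 0" for n by (simp add: e_def)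
  have elim: "e \<longlonglongrightarrow> 0" unfolding e_def using LIMSEQ_Suc[OF lim_1_over_n] by simp
  show "concave_on {0..1} (\<lambda>t. det ((1 - t) *\<^sub>R B + t *\<^sub>R C) powr \<alpha>)"
  proof (rule concave_limit[where f = "\<lambda>n t. det ((1 - t) *\<^sub>R B + t *\<^sub>R C + e n *\<^sub>R mat 1) powr \<alpha>"])
    show "concave_on {0..1} (\<lambda>t. det ((1 - t) *\<^sub>R B + t *\<^sub>R C + e n *\<^sub>R mat 1) powr \<alpha>)" for n
      using approx_step[OF B C d epos a ad] by blast
    show "convex {0..1::real}" by simp
    fix t :: real assume t: "t \<in> {0..1}"
    have "(\<lambda>n. (1 - t) *\<^sub>R B + t *\<^sub>R C + e n *\<^sub>R mat 1) \<longlonglongrightarrow> (1 - t) *\<^sub>R B + t *\<^sub>R C + 0 *\<^sub>R mat 1"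
      by (intro tendsto_intros elim)
    hence "(\<lambda>n. det ((1 - t) *\<^sub>R B + t *\<^sub>R C + e n *\<^sub>R mat 1)) \<longlonglongrightarrow> det ((1 - t) *\<^sub>R B + t *\<^sub>R C)"
      using det_tendsto by force
    moreover have "\<forall>n. 0 \<le> det ((1 - t) *\<^sub>R B + t *\<^sub>R C + e n *\<^sub>R mat 1)"
      using approx_step[OF B C d epos a ad] t by blast
    ultimately show "(\<lambda>n. det ((1 - t) *\<^sub>R B + t *\<^sub>R C + e n *\<^sub>R mat 1) powr \<alpha>) \<longlonglongrightarrow> det ((1 - t) *\<^sub>R B + t *\<^sub>R C) powr \<alpha>"
      using a by (intro tendsto_powr') auto
  qed
qed

lemma easy_dir:
  fixes \<alpha> :: real
  assumes a: "\<alpha> > 0" and dd: "CARD('n::finite) \<ge> 2"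
    and L: "Lambda_concave (\<lambda>A::real^'n^'n. (det A) powr \<alpha>)"
  shows "\<alpha> * (real CARD('n) - 1) \<le> 1"
proof (rule ccontr)
  assume "\<not> ?thesis"
  hence gt: "\<alpha> * (real CARD('n) - 1) > 1" by simp
  obtain j :: 'n where True by blast
  define B :: "real^'n^'n" where "B = dg (\<lambda>i. if i = j then 1 else 0)"
  define C :: "real^'n^'n" where "C = dg (\<lambda>_. 1)"
  have Bp: "B \<in> psd_sym" unfolding B_def by (rule dg_psd) simp
  have Cp: "C \<in> psd_sym" unfolding C_def by (rule dg_psd) simp
  have CB: "C - B = dg (\<lambda>i. if i = j then 0 else 1)"
    by (simp add: B_def C_def dg_def vec_eq_iff)
  have dCB: "det (C - B) = 0" unfolding CB dg_det
    by (rule prod_zero) auto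
  have conc: "concave_on {0..1} (\<lambda>t. det ((1 - t) *\<^sub>R B + t *\<^sub>R C) powr \<alpha>)"
    using L Bp Cp dCB unfolding Lambda_concave_def by blast
  define m where "m = CARD('n) - 1"
  have m1: "m \<ge> 1" using dd by (simp add: m_def)
  have path: "det ((1 - t) *\<^sub>R B + t *\<^sub>R C) = t ^ m" for t
  proof -
    have "(1 - t) *\<^sub>R B + t *\<^sub>R C = dg (\<lambda>i. if i = j then 1 else t)"
      by (simp add: B_def C_def dg_def vec_eq_iff)
    hence "det ((1 - t) *\<^sub>R B + t *\<^sub>R C) = (\<Prod>i\<in>UNIV. if i = j then 1 else t)"
      by (simp add: dg_det)
    also have "\<dots> = (\<Prod>i\<in>UNIV - {j}. if i = j then 1 else t)"
      by (subst prod.remove[of UNIV j]) auto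
    also have "\<dots> = (\<Prod>i\<in>UNIV - {j}. t)" by (intro prod.cong) auto
    also have "\<dots> = t ^ m" by (simp add: m_def card_Diff_singleton)
    finally show ?thesis .
  qed
  have "(1 - 1/2) * det ((1 - 0) *\<^sub>R B + 0 *\<^sub>R C) powr \<alpha> + (1/2) * det ((1 - 1) *\<^sub>R B + 1 *\<^sub>R C) powr \<alpha>
      \<le> det ((1 - (1/2::real)) *\<^sub>R B + (1/2) *\<^sub>R C) powr \<alpha>"
    using concave_onD[OF conc, of "1/2" 0 1] by simp
  moreover have "(0::real)^m = 0" using m1 by simp
  ultimately have "1/2 \<le> ((1/2::real) ^ m) powr \<alpha>"
    unfolding path by simp
  also have "((1/2::real) ^ m) powr \<alpha> = (1/2) powr (real m * \<alpha>)"
    by (simp add: powr_realpow[symmetric] powr_powr)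
  also have "real m = real CARD('n) - 1" using dd by (simp add: m_def of_nat_diff)
  also have "(1/2::real) powr ((real CARD('n) - 1) * \<alpha>) < (1/2) powr 1"
    by (rule powr_less_mono') (use gt in \<open>auto simp: mult.commute\<close>)
  finally show False by simp
qed

theorem proposition1p2:
  fixes \<alpha> :: real
  assumes "CARD('n::finite) \<ge> 2" and "\<alpha> > 0"
  shows "Lambda_concave (\<lambda>A::real^'n^'n. (det A) powr \<alpha>) \<longleftrightarrow> \<alpha> \<le> 1 / (real CARD('n) - 1)"
proof -
  have pos: "real CARD('n) - 1 > 0" using assms(1) by simp
  have "\<alpha> \<le> 1 / (real CARD('n) - 1) \<longleftrightarrow> \<alpha> * (real CARD('n) - 1) \<le> 1"
    using pos by (simp add: pos_le_divide_eq)
  thus ?thesis using hard_dir[OF assms(2)] easy_dir[OF assms(2,1)] by blast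
qed



end
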